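(* Call a butterfly partition of $n$ a partition of $n$ into distinct parts $p_1>p_2>\dots>p_k$ with $k\ge 3$, $p_1=p_2+1=p_3+2$ and $p_k\ge 2$. For $n\ge 6$ let $s_e(n)$ (resp. $s_o(n)$) be the number of butterfly partitions of $n$ whose second largest part $p_2$ is even (resp. odd). For an integer $t$ put $P_1(t)=\tfrac12(3t^2+t+4)$, $P_2(t)=\tfrac12(3(t+1)^2-t-1)$, $P_3(t)=\tfrac12(3(t+1)^2-t+3)$, $P_4(t)=\tfrac12(3(t+1)^2+t+1)$. Then for every integer $n\ge 6$: (a) $s_e(n)=s_o(n)$ if $n\notin\{P_1(t),P_2(t),P_3(t),P_4(t)\}$ for every integer $t\ge 2$; (b) $s_e(n)=s_o(n)-1$ if $n=P_1(t)$ or $n=P_4(t)$ for some integer $t\ge 2$; (c) $s_e(n)=s_o(n)+1$ if $n=P_2(t)$ or $n=P_3(t)$ for some integer $t\ge 2$. *)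

theory Defs
  imports Main
begin

definition butterfly_partition :: "nat \<Rightarrow> nat list \<Rightarrow> bool" where
  "butterfly_partition n ps \<longleftrightarrow>
     sorted_wrt (>) ps \<and> (\<forall>p\<in>set ps. p > 0) \<and> sum_list ps = n \<and>
     length ps \<ge> 3 \<and> ps ! 0 = ps ! 1 + 1 \<and> ps ! 1 = ps ! 2 + 1 \<and> last ps \<ge> 2"

definition s_e :: "nat \<Rightarrow> nat" where
  "s_e n = card {ps. butterfly_partition n ps \<and> even (ps ! 1)}"

definition s_o :: "nat \<Rightarrow> nat" where
  "s_o n = card {ps. butterfly_partition n ps \<and> odd (ps ! 1)}"

definition P1 :: "int \<Rightarrow> int" where "P1 t = (3*t^2 + t + 4) div 2"
definition P2 :: "int \<Rightarrow> int" where "P2 t = (3*(t+1)^2 - t - 1) div 2"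
definition P3 :: "int \<Rightarrow> int" where "P3 t = (3*(t+1)^2 - t + 3) div 2"
definition P4 :: "int \<Rightarrow> int" where "P4 t = (3*(t+1)^2 + t + 1) div 2"

end

theory Submission
  imports Defs "HOL-Computational_Algebra.Formal_Power_Series"
begin

unbundle fps_syntax



definition adm :: "(nat \<Rightarrow> int fps) \<Rightarrow> bool" where
  "adm f \<longleftrightarrow> (\<forall>b n. n < b \<longrightarrow> f b $ n = 0)"

definition Ssum :: "(nat \<Rightarrow> int fps) \<Rightarrow> int fps" where
  "Ssum f = Abs_fps (\<lambda>n. \<Sum>b\<le>n. f b $ n)"

lemma Ssum_nth: "Ssum f $ n = (\<Sum>b\<le>n. f b $ n)"
  by (simp add: Ssum_def)

lemma Ssum_nth': assumes "adm f" "n \<le> N" shows "Ssum f $ n = (\<Sum>b\<le>N. f b $ n)"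
  unfolding Ssum_nth
  by (rule sum.mono_neutral_left) (use assms in \<open>auto simp: adm_def\<close>)

lemma Ssum_add: "Ssum (\<lambda>b. f b + g b) = Ssum f + Ssum g"
  by (simp add: fps_eq_iff Ssum_nth sum.distrib)

lemma adm_cmult: "adm f \<Longrightarrow> adm (\<lambda>b. c * f b)"
  unfolding adm_def fps_mult_nth by auto

lemma adm_add: "adm f \<Longrightarrow> adm g \<Longrightarrow> adm (\<lambda>b. f b + g b)"
  unfolding adm_def by auto

lemma Ssum_cmult: assumes "adm f" shows "Ssum (\<lambda>b. c * f b) = c * Ssum f"
proof (rule fps_ext)
  fix n
  have "Ssum (\<lambda>b. c * f b) $ n = (\<Sum>b\<le>n. \<Sum>i=0..n. c$i * f b $ (n - i))"
    by (simp add: Ssum_nth fps_mult_nth)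
  also have "\<dots> = (\<Sum>i=0..n. \<Sum>b\<le>n. c$i * f b $ (n - i))"
    by (rule sum.swap)
  also have "\<dots> = (\<Sum>i=0..n. c$i * Ssum f $ (n - i))"
    by (rule sum.cong) (simp_all add: Ssum_nth'[OF assms, of _ n] sum_distrib_left)
  also have "\<dots> = (c * Ssum f) $ n" by (simp add: fps_mult_nth)
  finally show "Ssum (\<lambda>b. c * f b) $ n = (c * Ssum f) $ n" .
qed

lemma Ssum_shift: assumes "adm f" shows "Ssum f = f 0 + Ssum (\<lambda>b. f (Suc b))"
proof (rule fps_ext)
  fix n
  have "Ssum f $ n = (\<Sum>b\<le>Suc n. f b $ n)"
    by (rule Ssum_nth'[OF assms]) simp
  also have "\<dots> = f 0 $ n + (\<Sum>b\<le>n. f (Suc b) $ n)"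
    by (rule sum.atMost_Suc_shift)
  finally show "Ssum f $ n = (f 0 + Ssum (\<lambda>b. f (Suc b))) $ n" by (simp add: Ssum_nth)
qed

definition Pk :: "nat \<Rightarrow> nat \<Rightarrow> int fps" where
  "Pk k b = (\<Prod>j<b. 1 + fps_X ^ (k + j))"

definition T :: "nat \<Rightarrow> nat \<Rightarrow> nat \<Rightarrow> int fps" where
  "T m k b = fps_X ^ (m * b) * ((-1) ^ b * Pk k b)"

definition H :: "nat \<Rightarrow> nat \<Rightarrow> int fps" where
  "H m k = Ssum (T m k)"

lemma adm_T: assumes "m \<ge> 1" shows "adm (T m k)"
  unfolding adm_def T_def
proof (intro allI impI)
  fix b n :: nat assume "n < b"
  with assms have "n < m * b" by (metis less_le_trans mult_1 mult_le_mono1)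
  then show "(fps_X ^ (m * b) * ((-1) ^ b * Pk k b)) $ n = 0"
    by (simp add: fps_X_power_mult_nth)
qed

lemma Pk_Suc1: "Pk k (Suc b) = (1 + fps_X ^ k) * Pk (Suc k) b"
  unfolding Pk_def by (subst prod.lessThan_Suc_shift) simp

lemma Pk_Suc2: "Pk k (Suc b) = Pk k b * (1 + fps_X ^ (k + b))"
  unfolding Pk_def by simp

lemma T_0: "T m k 0 = 1" by (simp add: T_def Pk_def)

lemma T_Suc1: "T m k (Suc b) = (- (fps_X ^ m * (1 + fps_X ^ k))) * T m (Suc k) b"
  unfolding T_def Pk_Suc1 by (simp add: power_add algebra_simps)

lemma T_Suc2: "T m k (Suc b) = (- (fps_X ^ m)) * T m k b + (- (fps_X ^ (m + k))) * T (Suc m) k b"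
proof -
  have e: "(fps_X::int fps) ^ (m * Suc b) * fps_X ^ (k + b) = fps_X ^ (m + k) * fps_X ^ (Suc m * b)"
    by (simp add: power_add[symmetric] algebra_simps)
  have "T m k (Suc b) = fps_X ^ (m * Suc b) * ((-1) ^ Suc b * Pk k b) 
        + (fps_X ^ (m * Suc b) * fps_X ^ (k + b)) * ((-1) ^ Suc b * Pk k b)"
    unfolding T_def Pk_Suc2 by (simp add: algebra_simps)
  also have "\<dots> = (- (fps_X ^ m)) * T m k b + (- (fps_X ^ (m + k))) * T (Suc m) k b"
    unfolding e T_def by (simp add: power_add algebra_simps)
  finally show ?thesis .
qed

lemma R2: assumes "m \<ge> 1" shows "H m k = 1 - fps_X ^ m * (1 + fps_X ^ k) * H m (Suc k)"
proof -
  have "H m k = T m k 0 + Ssum (\<lambda>b. T m k (Suc b))"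
    unfolding H_def by (rule Ssum_shift[OF adm_T[OF assms]])
  also have "Ssum (\<lambda>b. T m k (Suc b)) = (- (fps_X ^ m * (1 + fps_X ^ k))) * H m (Suc k)"
    unfolding T_Suc1 H_def by (rule Ssum_cmult[OF adm_T[OF assms]])
  finally show ?thesis by (simp add: T_0)
qed

lemma R1: assumes "m \<ge> 1" shows "(1 + fps_X ^ m) * H m k = 1 - fps_X ^ (m + k) * H (Suc m) k"
proof -
  have "H m k = T m k 0 + Ssum (\<lambda>b. T m k (Suc b))"
    unfolding H_def by (rule Ssum_shift[OF adm_T[OF assms]])
  also have "Ssum (\<lambda>b. T m k (Suc b)) = (- (fps_X ^ m)) * H m k + (- (fps_X ^ (m + k))) * H (Suc m) k"
    unfolding T_Suc2 H_def Ssum_add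
    using Ssum_cmult[OF adm_T[OF assms], of "- (fps_X ^ m)" k]
      Ssum_cmult[OF adm_T, of "Suc m" "- (fps_X ^ (m + k))" k]
    by simp
  finally have "H m k = 1 + (- (fps_X ^ m * H m k) - fps_X ^ (m + k) * H (Suc m) k)"
    by (simp add: T_0)
  then show ?thesis by (simp add: algebra_simps)
qed

lemma Phi_rec: assumes "k \<ge> 1"
  shows "H k k = 1 - fps_X ^ k + fps_X ^ (3 * k + 1) * H (Suc k) (Suc k)"
proof -
  have a: "(1 + fps_X ^ k) * H k k = 1 - fps_X ^ (k + k) * H (Suc k) k"
    using R1[OF assms] .
  have b: "H (Suc k) k = 1 - fps_X ^ (Suc k) * (1 + fps_X ^ k) * H (Suc k) (Suc k)"
    by (rule R2) simp
  have "(1 + fps_X ^ k) * H k k = (1 + fps_X ^ k) * (1 - fps_X ^ k + fps_X ^ (3 * k + 1) * H (Suc k) (Suc k))"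
  proof -
    have e1: "(fps_X::int fps) ^ (k + k) = fps_X ^ k * fps_X ^ k" by (simp add: power_add)
    have e2: "(fps_X::int fps) ^ (3 * k + 1) = fps_X ^ k * fps_X ^ k * fps_X ^ Suc k"
    proof -
      have "3*k+1 = k + k + Suc k" by simp
      then show ?thesis by (simp only: power_add)
    qed
    show ?thesis unfolding a b e1 e2 by (simp only: algebra_simps mult_1_left mult_1_right)
  qed
  moreover have "(1 + fps_X ^ k :: int fps) \<noteq> 0"
  proof
    assume "(1 + fps_X ^ k :: int fps) = 0"
    then have "(1 + fps_X ^ k :: int fps) $ 0 = 0" by simp
    then show False using assms by simp
  qed
  ultimately show ?thesis using mult_left_cancel by blast
qed




lemma Phi_nth: assumes "k \<ge> 1"
  shows "H k k $ n = (if n = 0 then 1 else 0) - (if n = k then 1 else 0)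
     + (if n < 3 * k + 1 then 0 else H (Suc k) (Suc k) $ (n - (3 * k + 1)))"
  by (subst Phi_rec[OF assms], unfold fps_add_nth fps_sub_nth fps_X_power_mult_nth) simp

definition EE :: "nat \<Rightarrow> nat \<Rightarrow> bool" where
  "EE k n \<longleftrightarrow> (\<exists>s. 2 * n + s = 3 * s^2 + 6 * k * s)"
definition FF :: "nat \<Rightarrow> nat \<Rightarrow> bool" where
  "FF k n \<longleftrightarrow> (\<exists>s. 2 * n = 3 * s^2 + 6 * k * s + s + 2 * k)"

lemma EE0: "EE k 0" unfolding EE_def by (rule exI[of _ 0]) simp

lemma EE_small: assumes "0 < n" "n < 3 * k + 1" shows "\<not> EE k n"
proof
  assume "EE k n"
  then obtain s where s: "2 * n + s = 3 * s^2 + 6 * k * s" unfolding EE_def by blast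
  show False
  proof (cases "s = 0")
    case True then show False using s assms by simp
  next
    case False
    then have "s \<le> s^2" "6 * k \<le> 6 * k * s" "1 \<le> s" by (simp_all add: power2_eq_square)
    then show False using s assms by linarith
  qed
qed

lemma FF_small: assumes "n < 3 * k + 1" shows "FF k n \<longleftrightarrow> n = k"
proof
  assume "FF k n"
  then obtain s where s: "2 * n = 3 * s^2 + 6 * k * s + s + 2 * k" unfolding FF_def by blast
  show "n = k"
  proof (cases "s = 0")
    case True then show ?thesis using s by simp
  next
    case False
    then have "s \<le> s^2" "6 * k \<le> 6 * k * s" "1 \<le> s" by (simp_all add: power2_eq_square)
    then show ?thesis using s assms by linarith
  qed
next
  assume "n = k" then show "FF k n" unfolding FF_def by (intro exI[of _ 0]) simp
qed

lemma EE_step: assumes "k \<ge> 1" shows "EE k (n + (3 * k + 1)) \<longleftrightarrow> EE (Suc k) n"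
proof
  assume "EE k (n + (3 * k + 1))"
  then obtain s where s: "2 * (n + (3 * k + 1)) + s = 3 * s^2 + 6 * k * s" unfolding EE_def by blast
  have "s \<noteq> 0"
  proof
    assume "s = 0" with s show False by simp
  qed
  then obtain t where t: "s = Suc t" by (cases s) auto
  have "2 * n + t = 3 * t^2 + 6 * Suc k * t"
    using s unfolding t by (simp add: algebra_simps power2_eq_square)
  then show "EE (Suc k) n" unfolding EE_def by blast
next
  assume "EE (Suc k) n"
  then obtain t where t: "2 * n + t = 3 * t^2 + 6 * Suc k * t" unfolding EE_def by blast
  have "2 * (n + (3 * k + 1)) + Suc t = 3 * (Suc t)^2 + 6 * k * Suc t"
    using t by (simp add: algebra_simps power2_eq_square)
  then show "EE k (n + (3 * k + 1))" unfolding EE_def by blast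
qed

lemma FF_step: assumes "k \<ge> 1" shows "FF k (n + (3 * k + 1)) \<longleftrightarrow> FF (Suc k) n"
proof
  assume "FF k (n + (3 * k + 1))"
  then obtain s where s: "2 * (n + (3 * k + 1)) = 3 * s^2 + 6 * k * s + s + 2 * k" unfolding FF_def by blast
  have "s \<noteq> 0"
  proof
    assume "s = 0" with s show False by simp
  qed
  then obtain t where t: "s = Suc t" by (cases s) auto
  have "2 * n = 3 * t^2 + 6 * Suc k * t + t + 2 * Suc k"
    using s unfolding t by (simp add: algebra_simps power2_eq_square)
  then show "FF (Suc k) n" unfolding FF_def by blast
next
  assume "FF (Suc k) n"
  then obtain t where t: "2 * n = 3 * t^2 + 6 * Suc k * t + t + 2 * Suc k" unfolding FF_def by blast
  have "2 * (n + (3 * k + 1)) = 3 * (Suc t)^2 + 6 * k * Suc t + Suc t + 2 * k"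
    using t by (simp add: algebra_simps power2_eq_square)
  then show "FF k (n + (3 * k + 1))" unfolding FF_def by blast
qed

lemma Phi_char: "k \<ge> 1 \<Longrightarrow> H k k $ n = (if EE k n then 1 else if FF k n then -1 else 0)"
proof (induction n arbitrary: k rule: less_induct)
  case (less n)
  show ?case
  proof (cases "n < 3 * k + 1")
    case True
    show ?thesis
    proof (cases "n = 0")
      case True then show ?thesis using less.prems by (simp add: Phi_nth EE0)
    next
      case False
      then show ?thesis using less.prems \<open>n < 3 * k + 1\<close>
        by (simp add: Phi_nth EE_small FF_small)
    qed
  next
    case False
    then obtain m where m: "n = m + (3 * k + 1)" by (metis add.commute le_Suc_ex not_less)
    have "H (Suc k) (Suc k) $ m = (if EE (Suc k) m then 1 else if FF (Suc k) m then -1 else 0)"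
      using less.IH[of m "Suc k"] m by simp
    moreover have "H k k $ n = H (Suc k) (Suc k) $ m"
      using Phi_nth[OF less.prems, of n] m less.prems by simp
    moreover have "EE k n = EE (Suc k) m" "FF k n = FF (Suc k) m"
      using EE_step FF_step less.prems m by auto
    ultimately show ?thesis by simp
  qed
qed




lemma subsets_insert_split:
  assumes "finite J" "x \<notin> J"
  shows "{S. S \<subseteq> insert x J \<and> \<Sum>S = r} =
         {S. S \<subseteq> J \<and> \<Sum>S = r} \<union> insert x ` {T. T \<subseteq> J \<and> \<Sum>T + x = r}"
proof (intro equalityI subsetI)
  fix S assume S: "S \<in> {S. S \<subseteq> insert x J \<and> \<Sum>S = r}"
  show "S \<in> {S. S \<subseteq> J \<and> \<Sum>S = r} \<union> insert x ` {T. T \<subseteq> J \<and> \<Sum>T + x = r}"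
  proof (cases "x \<in> S")
    case False then show ?thesis using S by auto
  next
    case True
    have fS: "finite S" using S assms(1) by (auto intro: finite_subset)
    have "\<Sum>S = x + \<Sum>(S - {x})" using True fS by (simp add: sum.remove)
    then have "\<Sum>(S - {x}) + x = r" using S by (simp add: add.commute)
    moreover have "S = insert x (S - {x})" using True by auto
    ultimately show ?thesis using S by (intro UnI2 image_eqI[of _ _ "S - {x}"]) auto
  qed
next
  fix S assume "S \<in> {S. S \<subseteq> J \<and> \<Sum>S = r} \<union> insert x ` {T. T \<subseteq> J \<and> \<Sum>T + x = r}"
  then show "S \<in> {S. S \<subseteq> insert x J \<and> \<Sum>S = r}"
  proof
    assume "S \<in> insert x ` {T. T \<subseteq> J \<and> \<Sum>T + x = r}"
    then obtain T where T: "T \<subseteq> J" "\<Sum>T + x = r" "S = insert x T" by auto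
    have "finite T" using T assms(1) by (auto intro: finite_subset)
    moreover have "x \<notin> T" using T assms(2) by auto
    ultimately show ?thesis using T by (auto simp: add.commute)
  qed auto
qed

lemma prod_nth_card:
  assumes "finite J"
  shows "(\<Prod>j\<in>J. 1 + fps_X ^ j :: int fps) $ r = int (card {S. S \<subseteq> J \<and> \<Sum>S = r})"
  using assms
proof (induction J arbitrary: r rule: finite_induct)
  case empty
  have "{S. S \<subseteq> {} \<and> \<Sum>S = r} = (if r = 0 then {{}} else {})" by auto
  then show ?case by simp
next
  case (insert x J)
  let ?P = "(\<Prod>j\<in>J. 1 + fps_X ^ j :: int fps)"
  have "(\<Prod>j\<in>insert x J. 1 + fps_X ^ j :: int fps) = ?P + fps_X ^ x * ?P"
    using insert by (simp add: algebra_simps)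
  then have c: "(\<Prod>j\<in>insert x J. 1 + fps_X ^ j :: int fps) $ r
       = ?P $ r + (if r < x then 0 else ?P $ (r - x))"
    by (simp add: fps_X_power_mult_nth)
  have fin: "finite {S. S \<subseteq> J \<and> P S}" for P using insert(1) by simp
  have disj: "{S. S \<subseteq> J \<and> \<Sum>S = r} \<inter> insert x ` {T. T \<subseteq> J \<and> \<Sum>T + x = r} = {}"
    using insert(2) by auto
  have inj: "inj_on (insert x) {T. T \<subseteq> J \<and> \<Sum>T + x = r}"
    using insert(2) by (auto simp: inj_on_def)
  have B: "{T. T \<subseteq> J \<and> \<Sum>T + x = r} = (if r < x then {} else {T. T \<subseteq> J \<and> \<Sum>T = r - x})"
    by auto
  have "card {S. S \<subseteq> insert x J \<and> \<Sum>S = r} =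
        card {S. S \<subseteq> J \<and> \<Sum>S = r} + card {T. T \<subseteq> J \<and> \<Sum>T + x = r}"
    unfolding subsets_insert_split[OF insert(1,2)]
    by (subst card_Un_disjoint) (use fin disj inj in \<open>auto simp: card_image\<close>)
  then show ?case using c B insert.IH by (simp split: if_splits)
qed

lemma Pk_prod: "Pk k b = (\<Prod>j\<in>{k..<k+b}. 1 + fps_X ^ j)"
proof -
  have "Pk k b = (\<Prod>j\<in>{0..<b}. 1 + fps_X ^ (j + k))"
    unfolding Pk_def by (simp add: atLeast0LessThan add.commute)
  also have "\<dots> = (\<Prod>j\<in>{0+k..<b+k}. 1 + fps_X ^ j)"
    by (rule prod.shift_bounds_nat_ivl[symmetric])
  finally show ?thesis by (simp add: add.commute)
qed

lemma Pk_nth: "Pk k b $ r = int (card {S. S \<subseteq> {k..<k+b} \<and> \<Sum>S = r})"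
  unfolding Pk_prod by (rule prod_nth_card) simp



definition Sub :: "nat \<Rightarrow> nat \<Rightarrow> nat set set" where
  "Sub a n = {S. S \<subseteq> {2..a-2} \<and> 3 * a + \<Sum>S = n}"

definition gl :: "nat \<Rightarrow> nat set \<Rightarrow> nat list" where
  "gl a S = [a+1, a, a-1] @ rev (sorted_list_of_set S)"

lemma sorted_gt_last: "sorted_wrt (>) (xs::nat list) \<Longrightarrow> y \<in> set xs \<Longrightarrow> last xs \<le> y"
proof (induction xs)
  case Nil then show ?case by simp
next
  case (Cons x xs)
  show ?case
  proof (cases "xs = []")
    case True then show ?thesis using Cons by simp
  next
    case False
    then have "last xs \<in> set xs" by simp
    then have "last xs < x" using Cons.prems(1) by simp
    then show ?thesis using Cons False by (auto intro: less_imp_le)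
  qed
qed

lemma sorted_list_of_set_strict: "sorted_wrt (<) xs \<Longrightarrow> sorted_list_of_set (set xs) = xs"
  by (simp add: sorted_list_of_set_sort_remdups distinct_remdups_id sorted_sort_id strict_sorted_iff)

lemma sum_list_distinct': "distinct (xs::nat list) \<Longrightarrow> sum_list xs = \<Sum>(set xs)"
  using sum_list_distinct_conv_sum_set[of xs "\<lambda>x. x"] by simp

lemma Sub_finite: "S \<in> Sub a n \<Longrightarrow> finite S"
  unfolding Sub_def by (auto intro: finite_subset)

lemma gl_bp:
  assumes "a \<ge> 3" "S \<in> Sub a n"
  shows "butterfly_partition n (gl a S)" "gl a S ! 1 = a"
proof -
  have fS: "finite S" using assms Sub_finite by blast
  have Sb: "S \<subseteq> {2..a-2}" "3 * a + \<Sum>S = n" using assms(2) unfolding Sub_def by auto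
  let ?L = "sorted_list_of_set S"
  have sL: "set ?L = S" "sorted_wrt (<) ?L" "distinct ?L" using fS
    by (simp_all add: strict_sorted_list_of_set)
  have sr: "sorted_wrt (>) (rev ?L)" using sL by (simp add: sorted_wrt_rev)
  have "\<forall>y\<in>S. 2 \<le> y \<and> y \<le> a - 2" using Sb(1) by auto
  then have lt: "\<forall>y\<in>set (rev ?L). y < a - 1 \<and> 2 \<le> y" using sL(1) assms(1) by auto
  have sum: "sum_list (rev ?L) = \<Sum>S" using sL sum_list_distinct'[of ?L] by simp
  have all2: "\<forall>p\<in>set (gl a S). 2 \<le> p" using lt assms(1) unfolding gl_def by auto
  have "last (gl a S) \<in> set (gl a S)" by (rule last_in_set) (simp add: gl_def)
  then have "last (gl a S) \<ge> 2" using all2 by blast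
  moreover have "sorted_wrt (>) (gl a S)"
    unfolding gl_def using sr lt assms(1) by (auto simp: sorted_wrt_append)
  moreover have "sum_list (gl a S) = n" unfolding gl_def using sum Sb(2) assms(1) by simp
  ultimately show "butterfly_partition n (gl a S)"
    unfolding butterfly_partition_def using all2 assms(1) by (auto simp: gl_def)
  show "gl a S ! 1 = a" by (simp add: gl_def)
qed

lemma bp_gl:
  assumes "butterfly_partition n ps"
  shows "3 \<le> ps ! 1" "ps ! 1 \<le> n" "set (drop 3 ps) \<in> Sub (ps ! 1) n"
        "ps = gl (ps ! 1) (set (drop 3 ps))"
proof -
  have A: "sorted_wrt (>) ps" "\<forall>p\<in>set ps. p > 0" "sum_list ps = n" "length ps \<ge> 3"
     "ps ! 0 = ps ! 1 + 1" "ps ! 1 = ps ! 2 + 1" "last ps \<ge> 2"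
    using assms unfolding butterfly_partition_def by auto
  obtain x0 x1 x2 rest where ps: "ps = x0 # x1 # x2 # rest"
  proof (cases ps)
    case Nil then show ?thesis using A(4) by simp
  next
    case (Cons y0 t0)
    show ?thesis
    proof (cases t0)
      case Nil then show ?thesis using A(4) Cons by simp
    next
      case (Cons y1 t1)
      show ?thesis
      proof (cases t1)
        case Nil then show ?thesis using A(4) \<open>ps = y0 # t0\<close> Cons by simp
      next
        case (Cons y2 t2)
        then show ?thesis using that \<open>ps = y0 # t0\<close> \<open>t0 = y1 # t1\<close> by blast
      qed
    qed
  qed
  have all2: "\<forall>p\<in>set ps. 2 \<le> p" using sorted_gt_last[OF A(1)] A(7) by (meson order_trans)
  have x: "x0 = x1 + 1" "x1 = x2 + 1" "x2 \<ge> 2" using A(5,6) all2 unfolding ps by auto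
  have sr: "sorted_wrt (>) rest" "\<forall>y\<in>set rest. y < x2" using A(1) unfolding ps by auto
  have r2: "\<forall>y\<in>set rest. 2 \<le> y" using all2 unfolding ps by auto
  have dr: "drop 3 ps = rest" unfolding ps by (simp add: numeral_3_eq_3)
  have "distinct rest" using sr(1) by (induction rest) auto
  then have sumr: "sum_list rest = \<Sum>(set rest)" by (rule sum_list_distinct')
  show "3 \<le> ps ! 1" using x unfolding ps by simp
  have sumps: "3 * x1 + \<Sum>(set rest) = n" using A(3) x sumr unfolding ps by simp
  then show "ps ! 1 \<le> n" unfolding ps by simp
  have "\<forall>y\<in>set rest. 2 \<le> y \<and> y \<le> x1 - 2" using sr(2) r2 x by auto
  then have "set rest \<subseteq> {2..x1-2}" by auto
  then show "set (drop 3 ps) \<in> Sub (ps ! 1) n"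
    unfolding Sub_def dr using sumps unfolding ps by simp
  have "sorted_wrt (<) (rev rest)" using sr(1) by (simp add: sorted_wrt_rev)
  then have "sorted_list_of_set (set rest) = rev rest"
    using sorted_list_of_set_strict[of "rev rest"] by simp
  then show "ps = gl (ps ! 1) (set (drop 3 ps))"
    unfolding gl_def dr using x unfolding ps by simp
qed

lemma gl_inj:
  assumes "finite S" "finite S'" "gl a S = gl a' S'"
  shows "a = a'" "S = S'"
proof -
  show "a = a'" using arg_cong[OF assms(3), of "\<lambda>l. l ! 1"] by (simp add: gl_def)
  then have "rev (sorted_list_of_set S) = rev (sorted_list_of_set S')"
    using assms(3) by (simp add: gl_def)
  then have "set (sorted_list_of_set S) = set (sorted_list_of_set S')" by simp
  then show "S = S'" using assms(1,2) by simp
qed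

lemma card_bp:
  "card {ps. butterfly_partition n ps \<and> Q (ps ! 1)} =
   (\<Sum>a\<in>{a. 3 \<le> a \<and> a \<le> n \<and> Q a}. card (Sub a n))"
proof -
  let ?A = "{a. 3 \<le> a \<and> a \<le> n \<and> Q a}"
  have eq: "{ps. butterfly_partition n ps \<and> Q (ps ! 1)} = (\<lambda>(a, S). gl a S) ` (SIGMA a:?A. Sub a n)"
  proof (intro equalityI subsetI)
    fix ps assume "ps \<in> {ps. butterfly_partition n ps \<and> Q (ps ! 1)}"
    then have bp: "butterfly_partition n ps" "Q (ps ! 1)" by auto
    show "ps \<in> (\<lambda>(a, S). gl a S) ` (SIGMA a:?A. Sub a n)"
      using bp_gl[OF bp(1)] bp(2) by (intro image_eqI[of _ _ "(ps ! 1, set (drop 3 ps))"]) auto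
  next
    fix ps assume "ps \<in> (\<lambda>(a, S). gl a S) ` (SIGMA a:?A. Sub a n)"
    then obtain a S where "a \<in> ?A" "S \<in> Sub a n" "ps = gl a S" by auto
    then show "ps \<in> {ps. butterfly_partition n ps \<and> Q (ps ! 1)}" using gl_bp by auto
  qed
  have inj: "inj_on (\<lambda>(a, S). gl a S) (SIGMA a:?A. Sub a n)"
    by (auto simp: inj_on_def dest: Sub_finite gl_inj)
  have fin: "finite ?A" by (rule finite_subset[of _ "{..n}"]) auto
  have finS: "\<forall>a\<in>?A. finite (Sub a n)"
    by (auto intro: finite_subset[of _ "Pow {2..a-2}" for a] simp: Sub_def)
  show ?thesis unfolding eq by (simp add: card_image[OF inj] fin finS)
qed




lemma neg1_pow_mult_nth: "(((-1)::int fps) ^ b * f) $ n = (-1) ^ b * f $ n"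
  by (induction b) auto

lemma T_nth: "T m k b $ r = (if r < m * b then 0 else (-1) ^ b * Pk k b $ (r - m * b))"
  unfolding T_def fps_X_power_mult_nth neg1_pow_mult_nth by simp

lemma D_sum: "int (s_e n) - int (s_o n) = (\<Sum>a\<in>{3..n}. (-1) ^ a * int (card (Sub a n)))"
proof -
  have e: "s_e n = (\<Sum>a\<in>{a. 3 \<le> a \<and> a \<le> n \<and> even a}. card (Sub a n))"
    unfolding s_e_def by (rule card_bp)
  have o: "s_o n = (\<Sum>a\<in>{a. 3 \<le> a \<and> a \<le> n \<and> odd a}. card (Sub a n))"
    unfolding s_o_def by (rule card_bp)
  have "(\<Sum>a\<in>{3..n}. (-1) ^ a * int (card (Sub a n)))
      = (\<Sum>a\<in>{3..n}. if even a then int (card (Sub a n)) else - int (card (Sub a n)))"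
    by (rule sum.cong) auto
  also have "\<dots> = (\<Sum>a\<in>{3..n} \<inter> {a. even a}. int (card (Sub a n)))
                 + (\<Sum>a\<in>{3..n} \<inter> - {a. even a}. - int (card (Sub a n)))"
    by (rule sum.If_cases) simp
  also have "{3..n} \<inter> {a. even a} = {a. 3 \<le> a \<and> a \<le> n \<and> even a}" by auto
  also have "{3..n} \<inter> - {a. even a} = {a. 3 \<le> a \<and> a \<le> n \<and> odd a}" by auto
  finally show ?thesis unfolding e o by (simp add: sum_negf)
qed

lemma Sub_shift: "int (card (Sub (b + 3) n)) =
   (if n < 3 * b + 9 then 0 else Pk 2 b $ (n - 9 - 3 * b))"
proof (cases "n < 3 * b + 9")
  case True
  then have "Sub (b + 3) n = {}" unfolding Sub_def by auto
  then show ?thesis using True by simp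
next
  case False
  have "Sub (b + 3) n = {S. S \<subseteq> {2..<2+b} \<and> \<Sum>S = n - 9 - 3 * b}"
    unfolding Sub_def using False by auto
  then show ?thesis using False by (simp add: Pk_nth)
qed

lemma D_H32: assumes "n \<ge> 9" shows "int (s_e n) - int (s_o n) = - (H 3 2 $ (n - 9))"
proof -
  define G where "G b = (if n < 3 * b + 9 then 0 else (-1) ^ b * Pk 2 b $ (n - 9 - 3 * b))" for b
  have "int (s_e n) - int (s_o n) = (\<Sum>a\<in>{0+3..(n-3)+3}. (-1) ^ a * int (card (Sub a n)))"
    unfolding D_sum using assms by simp
  also have "\<dots> = (\<Sum>b\<in>{0..n-3}. (-1) ^ (b + 3) * int (card (Sub (b + 3) n)))"
    by (rule sum.shift_bounds_cl_nat_ivl)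
  also have "\<dots> = (\<Sum>b\<in>{0..n-3}. - G b)"
    by (rule sum.cong) (simp_all add: G_def Sub_shift power_add)
  also have "\<dots> = - (\<Sum>b\<in>{0..n-3}. G b)" by (simp add: sum_negf)
  also have "(\<Sum>b\<in>{0..n-3}. G b) = (\<Sum>b\<in>{..n-9}. G b)"
    by (rule sum.mono_neutral_right) (use assms in \<open>auto simp: G_def\<close>)
  also have "\<dots> = H 3 2 $ (n - 9)"
    unfolding H_def Ssum_nth T_nth G_def
    by (rule sum.cong) (use assms in \<open>auto simp: algebra_simps\<close>)
  finally show ?thesis .
qed

definition phi :: "nat \<Rightarrow> int" where
  "phi m = (if EE 3 m then 1 else if FF 3 m then -1 else 0)"

lemma D_formula: "int (s_e n) - int (s_o n) =
   (if n = 9 then -1 else 0) + (if 12 \<le> n then phi (n - 12) else 0) + (if 14 \<le> n then phi (n - 14) else 0)"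
proof (cases "n \<ge> 9")
  case True
  have h: "H 3 2 = 1 - fps_X ^ 3 * (1 + fps_X ^ 2) * H 3 3" using R2[of 3 2] by simp
  have "H 3 2 $ (n - 9) = (if n - 9 = 0 then 1 else 0)
          - (fps_X ^ 3 * H 3 3) $ (n - 9) - (fps_X ^ 5 * H 3 3) $ (n - 9)"
    unfolding h by (simp add: algebra_simps power_add[symmetric])
  also have "\<dots> = (if n = 9 then 1 else 0) - (if 12 \<le> n then phi (n - 12) else 0)
       - (if 14 \<le> n then phi (n - 14) else 0)"
    unfolding fps_X_power_mult_nth phi_def using True Phi_char[of 3] by auto
  finally show ?thesis using D_H32[OF True] by simp
next
  case False
  have "Sub a n = {}" if "a \<in> {3..n}" for a using that False by (auto simp: Sub_def)
  then have "int (s_e n) - int (s_o n) = 0" unfolding D_sum by simp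
  then show ?thesis using False by simp
qed



definition V :: "nat \<Rightarrow> bool" where "V m \<longleftrightarrow> EE 3 m \<or> FF 3 m"

lemma EE3: "EE 3 m \<longleftrightarrow> (\<exists>s. 2 * m = 3 * (s * s) + 17 * s)"
proof -
  have "(2 * m + s = 3 * s^2 + 6 * 3 * s) \<longleftrightarrow> (2 * m = 3 * (s * s) + 17 * s)" for s
    by (simp add: power2_eq_square algebra_simps)
  then show ?thesis unfolding EE_def by simp
qed

lemma FF3: "FF 3 m \<longleftrightarrow> (\<exists>s. 2 * m = 3 * (s * s) + 19 * s + 6)"
proof -
  have "(2 * m = 3 * s^2 + 6 * 3 * s + s + 2 * 3) \<longleftrightarrow> (2 * m = 3 * (s * s) + 19 * s + 6)" for s
    by (simp add: power2_eq_square algebra_simps)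
  then show ?thesis unfolding FF_def by simp
qed

lemma V_param: assumes "V x"
  obtains s where "3 * (s * s) + 17 * s \<le> 2 * x" "2 * x \<le> 3 * (s * s) + 19 * s + 6"
     "2 * x = 3 * (s * s) + 17 * s \<or> 2 * x = 3 * (s * s) + 19 * s + 6"
  using assms unfolding V_def EE3 FF3 by force

lemma sq_step: assumes "(s::nat) + 1 \<le> s'" shows "s * s + 2 * s + 1 \<le> s' * s'"
proof -
  have "(s + 1) * (s + 1) \<le> s' * s'" using mult_le_mono[OF assms assms] .
  then show ?thesis by (simp add: algebra_simps)
qed

lemma gap: assumes "V x" "V y" "x < y" shows "x + 3 \<le> y"
proof -
  obtain s where s: "3 * (s * s) + 17 * s \<le> 2 * x" "2 * x \<le> 3 * (s * s) + 19 * s + 6"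
     "2 * x = 3 * (s * s) + 17 * s \<or> 2 * x = 3 * (s * s) + 19 * s + 6"
    using V_param[OF assms(1)] by blast
  obtain t where t: "3 * (t * t) + 17 * t \<le> 2 * y" "2 * y \<le> 3 * (t * t) + 19 * t + 6"
     "2 * y = 3 * (t * t) + 17 * t \<or> 2 * y = 3 * (t * t) + 19 * t + 6"
    using V_param[OF assms(2)] by blast
  consider "s < t" | "t < s" | "s = t" by linarith
  then show ?thesis
  proof cases
    case 1
    then have "s * s + 2 * s + 1 \<le> t * t" using sq_step by simp
    then show ?thesis using s(1,2) t(1,2) 1 by linarith
  next
    case 2
    then have "t * t + 2 * t + 1 \<le> s * s" using sq_step by simp
    then show ?thesis using s(1,2) t(1,2) 2 assms(3) by linarith
  next
    case 3
    then show ?thesis using s t assms(3) by auto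
  qed
qed

lemma EF_disj: "EE 3 m \<Longrightarrow> \<not> FF 3 m"
proof
  assume "EE 3 m" "FF 3 m"
  then obtain s t where s: "2 * m = 3 * (s * s) + 17 * s" and t: "2 * m = 3 * (t * t) + 19 * t + 6"
    unfolding EE3 FF3 by blast
  consider "s \<le> t" | "t < s" by linarith
  then show False
  proof cases
    case 1
    have "s * s \<le> t * t" using mult_le_mono[OF 1 1] .
    then show False using s t 1 by linarith
  next
    case 2
    then have "t * t + 2 * t + 1 \<le> s * s" using sq_step by simp
    then show False using s t 2 by linarith
  qed
qed

lemma phi_E: "EE 3 m \<Longrightarrow> phi m = 1" by (simp add: phi_def)
lemma phi_F: "FF 3 m \<Longrightarrow> phi m = -1" using EF_disj by (auto simp: phi_def)
lemma phi_0: "\<not> V m \<Longrightarrow> phi m = 0" by (simp add: phi_def V_def)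

lemma near_up: "V x \<Longrightarrow> \<not> V (x + 2)"
  using gap[of x "x + 2"] by auto
lemma near_down: "V x \<Longrightarrow> 2 \<le> x \<Longrightarrow> \<not> V (x - 2)"
  using gap[of "x - 2" x] by auto

lemma half_eq: assumes "even (z::int)" shows "w = z div 2 \<longleftrightarrow> 2 * w = z"
proof -
  obtain k where "z = 2 * k" using assms by (elim evenE)
  then show ?thesis by simp
qed

lemma P1_eq: assumes "t \<ge> 2" shows "int n = P1 t \<longleftrightarrow> 2 * n = 3 * (nat (t-2) * nat (t-2)) + 13 * nat (t-2) + 18"
proof -
  obtain s where t: "t = int s + 2" using assms by (metis add.commute le_add_diff_inverse zle_iff_zadd)
  have ev: "even (3*t^2 + t + 4)" by (simp add: power2_eq_square even_add even_mult_iff)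
  have "int n = P1 t \<longleftrightarrow> 2 * int n = 3*t^2 + t + 4"
    unfolding P1_def by (rule half_eq[OF ev])
  also have "3*t^2 + t + 4 = int (3 * (s * s) + 13 * s + 18)"
    unfolding t by (simp add: power2_eq_square algebra_simps)
  also have "2 * int n = int (2 * n)" by simp
  finally have "int n = P1 t \<longleftrightarrow> 2 * n = 3 * (s * s) + 13 * s + 18"
    by (simp only: of_nat_eq_iff)
  moreover have "nat (t - 2) = s" using t by simp
  ultimately show ?thesis by simp
qed

lemma P2_eq: assumes "t \<ge> 2" shows "int n = P2 t \<longleftrightarrow> 2 * n = 3 * (nat (t-2) * nat (t-2)) + 17 * nat (t-2) + 24"
proof -
  obtain s where t: "t = int s + 2" using assms by (metis add.commute le_add_diff_inverse zle_iff_zadd)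
  have ev: "even (3*(t+1)^2 - t - 1)" by (simp add: power2_eq_square even_add even_mult_iff)
  have "int n = P2 t \<longleftrightarrow> 2 * int n = 3*(t+1)^2 - t - 1"
    unfolding P2_def by (rule half_eq[OF ev])
  also have "3*(t+1)^2 - t - 1 = int (3 * (s * s) + 17 * s + 24)"
    unfolding t by (simp add: power2_eq_square algebra_simps)
  also have "2 * int n = int (2 * n)" by simp
  finally have "int n = P2 t \<longleftrightarrow> 2 * n = 3 * (s * s) + 17 * s + 24"
    by (simp only: of_nat_eq_iff)
  moreover have "nat (t - 2) = s" using t by simp
  ultimately show ?thesis by simp
qed

lemma P3_eq: assumes "t \<ge> 2" shows "int n = P3 t \<longleftrightarrow> 2 * n = 3 * (nat (t-2) * nat (t-2)) + 17 * nat (t-2) + 28"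
proof -
  obtain s where t: "t = int s + 2" using assms by (metis add.commute le_add_diff_inverse zle_iff_zadd)
  have ev: "even (3*(t+1)^2 - t + 3)" by (simp add: power2_eq_square even_add even_mult_iff)
  have "int n = P3 t \<longleftrightarrow> 2 * int n = 3*(t+1)^2 - t + 3"
    unfolding P3_def by (rule half_eq[OF ev])
  also have "3*(t+1)^2 - t + 3 = int (3 * (s * s) + 17 * s + 28)"
    unfolding t by (simp add: power2_eq_square algebra_simps)
  also have "2 * int n = int (2 * n)" by simp
  finally have "int n = P3 t \<longleftrightarrow> 2 * n = 3 * (s * s) + 17 * s + 28"
    by (simp only: of_nat_eq_iff)
  moreover have "nat (t - 2) = s" using t by simp
  ultimately show ?thesis by simp
qed

lemma P4_eq: assumes "t \<ge> 2" shows "int n = P4 t \<longleftrightarrow> 2 * n = 3 * (nat (t-2) * nat (t-2)) + 19 * nat (t-2) + 30"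
proof -
  obtain s where t: "t = int s + 2" using assms by (metis add.commute le_add_diff_inverse zle_iff_zadd)
  have ev: "even (3*(t+1)^2 + t + 1)" by (simp add: power2_eq_square even_add even_mult_iff)
  have "int n = P4 t \<longleftrightarrow> 2 * int n = 3*(t+1)^2 + t + 1"
    unfolding P4_def by (rule half_eq[OF ev])
  also have "3*(t+1)^2 + t + 1 = int (3 * (s * s) + 19 * s + 30)"
    unfolding t by (simp add: power2_eq_square algebra_simps)
  also have "2 * int n = int (2 * n)" by simp
  finally have "int n = P4 t \<longleftrightarrow> 2 * n = 3 * (s * s) + 19 * s + 30"
    by (simp only: of_nat_eq_iff)
  moreover have "nat (t - 2) = s" using t by simp
  ultimately show ?thesis by simp
qed



lemma E_P2: assumes "EE 3 m" shows "\<exists>t\<ge>2. int (m + 12) = P2 t"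
proof -
  obtain s where s: "2 * m = 3 * (s * s) + 17 * s" using assms unfolding EE3 by blast
  have "int (m + 12) = P2 (int s + 2)" using P2_eq[of "int s + 2" "m + 12"] s by simp
  then show ?thesis by (intro exI[of _ "int s + 2"]) simp
qed

lemma F_P4: assumes "FF 3 m" shows "\<exists>t\<ge>2. int (m + 12) = P4 t"
proof -
  obtain s where s: "2 * m = 3 * (s * s) + 19 * s + 6" using assms unfolding FF3 by blast
  have "int (m + 12) = P4 (int s + 2)" using P4_eq[of "int s + 2" "m + 12"] s by simp
  then show ?thesis by (intro exI[of _ "int s + 2"]) simp
qed

lemma E_P3: assumes "EE 3 m" shows "\<exists>t\<ge>2. int (m + 14) = P3 t"
proof -
  obtain s where s: "2 * m = 3 * (s * s) + 17 * s" using assms unfolding EE3 by blast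
  have "int (m + 14) = P3 (int s + 2)" using P3_eq[of "int s + 2" "m + 14"] s by simp
  then show ?thesis by (intro exI[of _ "int s + 2"]) simp
qed

lemma F_P1: assumes "FF 3 m" shows "\<exists>t\<ge>2. int (m + 14) = P1 t"
proof -
  obtain s where s: "2 * m = 3 * (s * s) + 19 * s + 6" using assms unfolding FF3 by blast
  have e: "nat (int s + 3 - 2) = s + 1" by simp
  have "2 * (m + 14) = 3 * ((s + 1) * (s + 1)) + 13 * (s + 1) + 18" using s by (simp add: algebra_simps)
  then have "int (m + 14) = P1 (int s + 3)" using P1_eq[of "int s + 3" "m + 14"] e by simp
  then show ?thesis by (intro exI[of _ "int s + 3"]) simp
qed

lemma P1_2: "P1 2 = 9" by (simp add: P1_def)

theorem theorem4p6:
  fixes n :: nat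
  assumes "n \<ge> 6"
  shows "((\<forall>t::int. t \<ge> 2 \<longrightarrow> int n \<notin> {P1 t, P2 t, P3 t, P4 t}) \<longrightarrow> s_e n = s_o n)
       \<and> ((\<exists>t::int. t \<ge> 2 \<and> (int n = P1 t \<or> int n = P4 t)) \<longrightarrow> int (s_e n) = int (s_o n) - 1)
       \<and> ((\<exists>t::int. t \<ge> 2 \<and> (int n = P2 t \<or> int n = P3 t)) \<longrightarrow> int (s_e n) = int (s_o n) + 1)"
proof (intro conjI impI)
  note D = D_formula[of n]
  {
    assume H: "\<forall>t::int. t \<ge> 2 \<longrightarrow> int n \<notin> {P1 t, P2 t, P3 t, P4 t}"
    have n9: "n \<noteq> 9" using H[rule_format, of 2] P1_2 by auto
    have a12: "phi (n - 12) = 0" if "12 \<le> n"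
    proof (rule phi_0)
      show "\<not> V (n - 12)"
      proof
        assume "V (n - 12)"
        then show False unfolding V_def
        proof
          assume "EE 3 (n - 12)"
          then obtain t where "t \<ge> 2" "int (n - 12 + 12) = P2 t" using E_P2 by blast
          then show False using H that by auto
        next
          assume "FF 3 (n - 12)"
          then obtain t where "t \<ge> 2" "int (n - 12 + 12) = P4 t" using F_P4 by blast
          then show False using H that by auto
        qed
      qed
    qed
    have a14: "phi (n - 14) = 0" if "14 \<le> n"
    proof (rule phi_0)
      show "\<not> V (n - 14)"
      proof
        assume "V (n - 14)"
        then show False unfolding V_def
        proof
          assume "EE 3 (n - 14)"
          then obtain t where "t \<ge> 2" "int (n - 14 + 14) = P3 t" using E_P3 by blast
          then show False using H that by auto
        next
          assume "FF 3 (n - 14)"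
          then obtain t where "t \<ge> 2" "int (n - 14 + 14) = P1 t" using F_P1 by blast
          then show False using H that by auto
        qed
      qed
    qed
    have "int (s_e n) - int (s_o n) = 0" using D n9 a12 a14 by simp
    then show "s_e n = s_o n" by simp
  }
  {
    assume "\<exists>t::int. t \<ge> 2 \<and> (int n = P1 t \<or> int n = P4 t)"
    then obtain t where t: "t \<ge> 2" "int n = P1 t \<or> int n = P4 t" by blast
    define s where "s = nat (t - 2)"
    have "int (s_e n) - int (s_o n) = -1"
    proof (cases "int n = P1 t")
      case True
      then have e: "2 * n = 3 * (s * s) + 13 * s + 18" using P1_eq[OF t(1)] s_def by simp
      show ?thesis
      proof (cases s)
        case 0
        then have "n = 9" using e by simp
        then show ?thesis using D by simp
      next
        case (Suc r)
        have e': "2 * n = 3 * (r * r) + 19 * r + 34" using e unfolding Suc by (simp add: algebra_simps)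
        have F: "FF 3 (n - 14)" unfolding FF3 using e' by (intro exI[of _ r]) linarith
        then have "V (n - 14)" unfolding V_def by simp
        moreover have "n - 12 = n - 14 + 2" using e' by linarith
        ultimately have "phi (n - 12) = 0" using near_up phi_0 by metis
        moreover have "phi (n - 14) = -1" using phi_F[OF F] .
        moreover have "n \<ge> 14" "n \<noteq> 9" using e' by linarith+
        ultimately show ?thesis using D by simp
      qed
    next
      case False
      then have "int n = P4 t" using t by simp
      then have e: "2 * n = 3 * (s * s) + 19 * s + 30" using P4_eq[OF t(1)] s_def by simp
      have F: "FF 3 (n - 12)" unfolding FF3 using e by (intro exI[of _ s]) linarith
      then have "V (n - 12)" unfolding V_def by simp
      moreover have "n - 14 = n - 12 - 2" "2 \<le> n - 12" using e by linarith+
      ultimately have "phi (n - 14) = 0" using near_down phi_0 by metis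
      moreover have "phi (n - 12) = -1" using phi_F[OF F] .
      moreover have "n \<ge> 14" "n \<noteq> 9" using e by linarith+
      ultimately show ?thesis using D by simp
    qed
    then show "int (s_e n) = int (s_o n) - 1" by simp
  }
  {
    assume "\<exists>t::int. t \<ge> 2 \<and> (int n = P2 t \<or> int n = P3 t)"
    then obtain t where t: "t \<ge> 2" "int n = P2 t \<or> int n = P3 t" by blast
    define s where "s = nat (t - 2)"
    have "int (s_e n) - int (s_o n) = 1"
    proof (cases "int n = P2 t")
      case True
      then have e: "2 * n = 3 * (s * s) + 17 * s + 24" using P2_eq[OF t(1)] s_def by simp
      have E: "EE 3 (n - 12)" unfolding EE3 using e by (intro exI[of _ s]) linarith
      then have V: "V (n - 12)" unfolding V_def by simp
      have p14: "phi (n - 14) = 0" if "14 \<le> n"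
      proof -
        have "n - 14 = n - 12 - 2" "2 \<le> n - 12" using that by linarith+
        then show ?thesis using near_down[OF V] phi_0 by metis
      qed
      have "phi (n - 12) = 1" using phi_E[OF E] .
      moreover have "n \<ge> 12" "n \<noteq> 9" using e by linarith+
      ultimately show ?thesis using D p14 by simp
    next
      case False
      then have "int n = P3 t" using t by simp
      then have e: "2 * n = 3 * (s * s) + 17 * s + 28" using P3_eq[OF t(1)] s_def by simp
      have E: "EE 3 (n - 14)" unfolding EE3 using e by (intro exI[of _ s]) linarith
      then have "V (n - 14)" unfolding V_def by simp
      moreover have "n - 12 = n - 14 + 2" using e by linarith
      ultimately have "phi (n - 12) = 0" using near_up phi_0 by metis
      moreover have "phi (n - 14) = 1" using phi_E[OF E] .
      moreover have "n \<ge> 14" "n \<noteq> 9" using e by linarith+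
      ultimately show ?thesis using D by simp
    qed
    then show "int (s_e n) = int (s_o n) + 1" by simp
  }
qed


end
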